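(* Assume that $f\in\mathcal D(\alpha,\beta)$ and $g\in\mathcal D(a,b)$ for some $\alpha,a\ge 0$ and $\beta,b\in\mathbb R$. Let $h:\mathbb R\to\mathbb R$ be defined by $h(k)=(a-\alpha)k-(b-\beta)$. If $g\ge f$, then $\alpha\le a$, and if moreover $\alpha=a$ then $\beta\ge b$. If $g\ge f$ and $g-f\ge h$, then $(g-f)^c\in\mathcal D(a-\alpha,b-\beta)$.
   Context: For $\alpha\ge0$ and $\beta\in\mathbb R$, $\mathcal D(\alpha,\beta)$ denotes the set of increasing convex functions $f:\mathbb R\to\mathbb R_+$ such that $\lim_{z\to-\infty}f(z)=0$ and $\lim_{z\to\infty}\{f(z)-(\alpha z-\beta)\}=0$. For a function $u:\mathbb R\to\mathbb R$, $u^c$ denotes the largest convex function lying below $u$ (the convex hull). *)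

theory Defs
  imports "HOL-Analysis.Analysis"
begin

definition classD :: "real \<Rightarrow> real \<Rightarrow> (real \<Rightarrow> real) set" where
  "classD \<alpha> \<beta> = {f. mono f \<and> convex_on UNIV f \<and> (\<forall>z. f z \<ge> 0)
     \<and> (f \<longlongrightarrow> 0) at_bot
     \<and> ((\<lambda>z. f z - (\<alpha> * z - \<beta>)) \<longlongrightarrow> 0) at_top}"

text \<open>Convex hull (lower convex envelope) u^c: the pointwise supremum of all convex
  functions lying below u, i.e. the largest convex function below u (when u has a
  convex minorant).\<close>
definition convex_hull_fun :: "(real \<Rightarrow> real) \<Rightarrow> real \<Rightarrow> real" where
  "convex_hull_fun u x = (SUP v \<in> {v. convex_on UNIV v \<and> (\<forall>y. v y \<le> u y)}. v x)"

end

theory Submission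
  imports Defs
begin

lemma convex_lim_mono:
  fixes \<phi> :: "real \<Rightarrow> real"
  assumes cv: "convex_on UNIV \<phi>" and nn: "\<forall>z. \<phi> z \<ge> 0" and lim: "(\<phi> \<longlongrightarrow> 0) at_bot"
  shows "mono \<phi>"
proof (rule monoI, rule ccontr)
  fix x y :: real
  assume xy: "x \<le> y" and nle: "\<not> \<phi> x \<le> \<phi> y"
  then have xy': "x < y" by (metis order.order_iff_strict)
  have gt: "\<phi> z > \<phi> x" if z: "z < x" for z
  proof -
    define t where "t = (x - z) / (y - z)"
    have t0: "t > 0" and t1: "t < 1" using z xy' by (auto simp: t_def field_simps)
    have tyz: "t * (y - z) = x - z" using z xy' by (simp add: t_def)
    have xe: "(1 - t) *\<^sub>R z + t *\<^sub>R y = x" using tyz by (simp add: algebra_simps)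
    have "\<phi> x \<le> (1 - t) * \<phi> z + t * \<phi> y"
      using convex_onD[OF cv, of t z y] t0 t1 xe by simp
    also have "\<dots> < (1 - t) * \<phi> z + t * \<phi> x" using t0 nle by simp
    finally have "(1 - t) * \<phi> x < (1 - t) * \<phi> z" by (simp add: algebra_simps)
    then show ?thesis using t1 by simp
  qed
  have "\<phi> x \<le> 0"
  proof (rule tendsto_lowerbound[OF lim])
    show "\<forall>\<^sub>F i in at_bot. \<phi> x \<le> \<phi> i"
      unfolding eventually_at_bot_linorder
      by (rule exI[of _ "x - 1"]) (auto intro!: less_imp_le gt)
  qed simp
  moreover have "\<phi> x > 0" using nle nn[rule_format, of y] by simp
  ultimately show False by simp
qed

theorem lemma2p4:
  fixes f g :: "real \<Rightarrow> real" and \<alpha> \<beta> a b :: real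
  assumes "\<alpha> \<ge> 0" and "a \<ge> 0"
    and "f \<in> classD \<alpha> \<beta>" and "g \<in> classD a b"
  defines "h \<equiv> (\<lambda>k. (a - \<alpha>) * k - (b - \<beta>))"
  shows "((\<forall>z. g z \<ge> f z) \<longrightarrow> \<alpha> \<le> a \<and> (\<alpha> = a \<longrightarrow> \<beta> \<ge> b)) \<and>
         ((\<forall>z. g z \<ge> f z) \<and> (\<forall>k. g k - f k \<ge> h k) \<longrightarrow>
           convex_hull_fun (\<lambda>z. g z - f z) \<in> classD (a - \<alpha>) (b - \<beta>))"
proof -
  have fbot: "(f \<longlongrightarrow> 0) at_bot" and ftop: "((\<lambda>z. f z - (\<alpha> * z - \<beta>)) \<longlongrightarrow> 0) at_top"
    using assms(3) by (auto simp: classD_def)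
  have gbot: "(g \<longlongrightarrow> 0) at_bot" and gtop: "((\<lambda>z. g z - (a * z - b)) \<longlongrightarrow> 0) at_top"
    using assms(4) by (auto simp: classD_def)
  define u where "u = (\<lambda>z. g z - f z)"
  have utop: "((\<lambda>z. u z - h z) \<longlongrightarrow> 0) at_top"
  proof -
    have "((\<lambda>z. (g z - (a * z - b)) - (f z - (\<alpha> * z - \<beta>))) \<longlongrightarrow> 0 - 0) at_top"
      by (intro tendsto_diff gtop ftop)
    moreover have "(\<lambda>z. (g z - (a * z - b)) - (f z - (\<alpha> * z - \<beta>))) = (\<lambda>z. u z - h z)"
      by (auto simp: u_def h_def algebra_simps)
    ultimately show ?thesis by simp
  qed
  have ubot: "(u \<longlongrightarrow> 0) at_bot"
    using tendsto_diff[OF gbot fbot] by (simp add: u_def)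
  have part1: "\<alpha> \<le> a \<and> (\<alpha> = a \<longrightarrow> \<beta> \<ge> b)" if ge: "\<forall>z. g z \<ge> f z"
  proof
    have u0: "\<And>z. u z \<ge> 0" using ge by (simp add: u_def)
    show "\<alpha> \<le> a"
    proof (rule ccontr)
      assume "\<not> \<alpha> \<le> a"
      hence pos: "\<alpha> - a > 0" by simp
      have "\<forall>\<^sub>F z in at_top. u z - h z < 1"
        using order_tendstoD(2)[OF utop, of 1] by simp
      then obtain N where N: "\<And>z. z \<ge> N \<Longrightarrow> u z - h z < 1"
        unfolding eventually_at_top_linorder by blast
      define z where "z = max N ((\<bar>b - \<beta>\<bar> + 1) / (\<alpha> - a))"
      have "(\<alpha> - a) * z \<ge> (\<alpha> - a) * ((\<bar>b - \<beta>\<bar> + 1) / (\<alpha> - a))"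
        using pos by (intro mult_left_mono) (auto simp: z_def)
      hence "(\<alpha> - a) * z \<ge> \<bar>b - \<beta>\<bar> + 1" using pos by simp
      hence "- h z \<ge> 1" by (simp add: h_def algebra_simps)
      moreover have "u z - h z < 1" using N by (simp add: z_def)
      ultimately show False using u0[of z] by linarith
    qed
    show "\<alpha> = a \<longrightarrow> \<beta> \<ge> b"
    proof
      assume "\<alpha> = a"
      hence hc: "h = (\<lambda>z. \<beta> - b)" by (simp add: h_def)
      have "(u \<longlongrightarrow> 0 + (\<beta> - b)) at_top"
        using tendsto_add[OF utop tendsto_const[of "\<beta> - b"]] by (simp add: hc)
      hence "0 \<le> 0 + (\<beta> - b)"
        by (rule tendsto_lowerbound) (auto simp: u0)
      thus "\<beta> \<ge> b" by simp
    qed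
  qed
  have part2: "convex_hull_fun u \<in> classD (a - \<alpha>) (b - \<beta>)"
    if ge: "\<forall>z. g z \<ge> f z" and gh: "\<forall>k. g k - f k \<ge> h k"
  proof -
    have u0: "\<And>z. u z \<ge> 0" using ge by (simp add: u_def)
    have uh: "\<And>z. u z \<ge> h z" using gh by (simp add: u_def)
    define S where "S = {v. convex_on UNIV v \<and> (\<forall>y. v y \<le> u y)}"
    define U where "U = convex_hull_fun u"
    have U_def': "\<And>x. U x = (SUP v\<in>S. v x)" by (simp add: U_def convex_hull_fun_def S_def)
    have zS: "(\<lambda>_. 0) \<in> S" using u0 by (simp add: S_def convex_on_const)
    have hcv: "convex_on UNIV h" by (rule convex_onI) (simp_all add: h_def algebra_simps)
    have hS: "h \<in> S" unfolding S_def using uh hcv by auto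
    have bdd: "bdd_above ((\<lambda>v. v x) ` S)" for x
      by (rule bdd_aboveI[of _ "u x"]) (auto simp: S_def)
    have upper: "v x \<le> U x" if "v \<in> S" for v x
      unfolding U_def' by (rule cSUP_upper[OF that bdd])
    have least: "U x \<le> u x" for x
      unfolding U_def' using zS by (intro cSUP_least) (auto simp: S_def)
    have U0: "U x \<ge> 0" for x using upper[OF zS] by simp
    have Uh: "U x \<ge> h x" for x using upper[OF hS] by simp
    have cvx: "convex_on UNIV U"
    proof (rule convex_onI)
      fix t x y :: real assume t: "t > 0" "t < 1"
      show "U ((1 - t) *\<^sub>R x + t *\<^sub>R y) \<le> (1 - t) * U x + t * U y"
        unfolding U_def'[of "(1 - t) *\<^sub>R x + t *\<^sub>R y"]
      proof (rule cSUP_least)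
        show "S \<noteq> {}" using zS by blast
        fix v assume v: "v \<in> S"
        hence "v ((1 - t) *\<^sub>R x + t *\<^sub>R y) \<le> (1 - t) * v x + t * v y"
          using t by (intro convex_onD) (auto simp: S_def)
        also have "\<dots> \<le> (1 - t) * U x + t * U y"
          using t upper[OF v, of x] upper[OF v, of y]
          by (intro add_mono mult_left_mono) auto
        finally show "v ((1 - t) *\<^sub>R x + t *\<^sub>R y) \<le> (1 - t) * U x + t * U y" .
      qed
    qed simp
    have Ubot: "(U \<longlongrightarrow> 0) at_bot"
      by (rule tendsto_sandwich[OF _ _ tendsto_const ubot]) (auto simp: U0 least)
    have Utop: "((\<lambda>z. U z - ((a - \<alpha>) * z - (b - \<beta>))) \<longlongrightarrow> 0) at_top"
    proof (rule tendsto_sandwich[OF _ _ tendsto_const utop])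
      show "\<forall>\<^sub>F n in at_top. 0 \<le> U n - ((a - \<alpha>) * n - (b - \<beta>))"
        using Uh by (simp add: h_def)
      show "\<forall>\<^sub>F n in at_top. U n - ((a - \<alpha>) * n - (b - \<beta>)) \<le> u n - h n"
        using least by (simp add: h_def)
    qed
    have "mono U" by (rule convex_lim_mono[OF cvx _ Ubot]) (simp add: U0)
    then show ?thesis
      using cvx U0 Ubot Utop by (simp add: classD_def U_def)
  qed
  show ?thesis using part1 part2 by (simp add: u_def)
qed

end
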